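(* Let $G=(V,E)$ be an undirected, unweighted, connected graph on $N$ vertices and let $u\in V$. Then $$\min\{\mathsf{fp}_{r=1}^{\mathrm{dB}}(G,\{u\}),\ \mathsf{fp}_{r=1}^{\mathrm{Bd}}(G,\{u\})\}\le 1/N.$$
   Context: Mixed $\delta$-updating on a connected undirected unweighted graph: each vertex holds a mutant (fitness $r$) or wild-type (fitness $1$); $f_S(u)$ is the fitness at $u$ when $S$ is the mutant set. At each step, with probability $\delta$ a death-Birth step: choose $v$ uniformly to die, choose a neighbor $u$ of $v$ with probability proportional to $f_S(u)$, $u$ copies its type onto $v$; with probability $1-\delta$ a Birth-death step: choose $u$ with probability proportional to $f_S(u)$ among all vertices, choose a uniformly random neighbor $v$ of $u$, $u$ copies its type onto $v$. $\mathsf{fp}_r^\delta(G,S_0)$ is the probability all vertices eventually become mutant from initial mutant set $S_0$; $\delta=\mathrm{dB}$ means $\delta=1$ and $\delta=\mathrm{Bd}$ means $\delta=0$. *)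

theory Defs
  imports "HOL-Probability.Probability_Mass_Function"
begin

definition connected_graph :: "'a set \<Rightarrow> ('a \<Rightarrow> 'a \<Rightarrow> bool) \<Rightarrow> bool" where
  "connected_graph V E \<longleftrightarrow> finite V \<and> V \<noteq> {} \<and>
     (\<forall>x y. E x y \<longrightarrow> x \<in> V \<and> y \<in> V) \<and>
     (\<forall>x y. E x y \<longrightarrow> E y x) \<and> (\<forall>x. \<not> E x x) \<and>
     (\<forall>x\<in>V. \<forall>y\<in>V. E\<^sup>*\<^sup>* x y)"

definition nbrs :: "'a set \<Rightarrow> ('a \<Rightarrow> 'a \<Rightarrow> bool) \<Rightarrow> 'a \<Rightarrow> 'a set" where
  "nbrs V E v = {u \<in> V. E v u}"

definition fitness :: "real \<Rightarrow> 'a set \<Rightarrow> 'a \<Rightarrow> real" where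
  "fitness r S u = (if u \<in> S then r else 1)"

definition weighted_pmf :: "'a set \<Rightarrow> ('a \<Rightarrow> real) \<Rightarrow> 'a pmf" where
  "weighted_pmf A w = embed_pmf (\<lambda>x. if x \<in> A then w x / (\<Sum>y\<in>A. w y) else 0)"

definition copy_type :: "'a set \<Rightarrow> 'a \<Rightarrow> 'a \<Rightarrow> 'a set" where
  "copy_type S u v = (if u \<in> S then insert v S else S - {v})"

definition dB_step :: "'a set \<Rightarrow> ('a \<Rightarrow> 'a \<Rightarrow> bool) \<Rightarrow> real \<Rightarrow> 'a set \<Rightarrow> 'a set pmf" where
  "dB_step V E r S =
     bind_pmf (pmf_of_set V) (\<lambda>v.
     bind_pmf (weighted_pmf (nbrs V E v) (fitness r S)) (\<lambda>u.
     return_pmf (copy_type S u v)))"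

definition Bd_step :: "'a set \<Rightarrow> ('a \<Rightarrow> 'a \<Rightarrow> bool) \<Rightarrow> real \<Rightarrow> 'a set \<Rightarrow> 'a set pmf" where
  "Bd_step V E r S =
     bind_pmf (weighted_pmf V (fitness r S)) (\<lambda>u.
     bind_pmf (pmf_of_set (nbrs V E u)) (\<lambda>v.
     return_pmf (copy_type S u v)))"

text \<open>The homogeneous states {} and V are absorbing
(every copy event leaves them unchanged); this is made explicit so the kernel is
well defined also on the one-vertex graph, where no vertex has a neighbour.\<close>
definition mixed_step :: "real \<Rightarrow> 'a set \<Rightarrow> ('a \<Rightarrow> 'a \<Rightarrow> bool) \<Rightarrow> real \<Rightarrow> 'a set \<Rightarrow> 'a set pmf" where
  "mixed_step \<delta> V E r S =
     (if S = {} \<or> S = V then return_pmf S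
      else bind_pmf (bernoulli_pmf \<delta>) (\<lambda>b. if b then dB_step V E r S else Bd_step V E r S))"

definition state_dist :: "real \<Rightarrow> 'a set \<Rightarrow> ('a \<Rightarrow> 'a \<Rightarrow> bool) \<Rightarrow> real \<Rightarrow> 'a set \<Rightarrow> nat \<Rightarrow> 'a set pmf" where
  "state_dist \<delta> V E r S0 n = ((\<lambda>p. bind_pmf p (mixed_step \<delta> V E r)) ^^ n) (return_pmf S0)"

text \<open>Fixation probability: probability that eventually all vertices are mutant.
Since V is absorbing, the events "X_n = V" increase with n, so this equals
the supremum (= limit) over n of P(X_n = V).\<close>
definition fp :: "real \<Rightarrow> 'a set \<Rightarrow> ('a \<Rightarrow> 'a \<Rightarrow> bool) \<Rightarrow> real \<Rightarrow> 'a set \<Rightarrow> real" where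
  "fp \<delta> V E r S0 = (SUP n. pmf (state_dist \<delta> V E r S0 n) V)"

end

theory Submission
  imports Defs
begin

definition phi :: "'a set \<Rightarrow> ('a \<Rightarrow> real) \<Rightarrow> 'a set \<Rightarrow> real" where
  "phi V w S = (\<Sum>x\<in>V. if x \<in> S then w x else 0)"

lemma phi_nonneg: "(\<And>x. x \<in> V \<Longrightarrow> 0 \<le> w x) \<Longrightarrow> 0 \<le> phi V w S"
  unfolding phi_def by (intro sum_nonneg) auto

lemma phi_split: "finite V \<Longrightarrow> v \<in> V \<Longrightarrow>
   phi V w T = (if v \<in> T then w v else 0) + (\<Sum>x\<in>V-{v}. if x \<in> T then w x else 0)"
  unfolding phi_def by (simp add: sum.remove)

lemma phi_copy:
  assumes "finite V" "v \<in> V"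
  shows "phi V w (copy_type S u v) = phi V w S + w v * ((if u \<in> S then 1 else 0) - (if v \<in> S then 1 else 0))"
proof -
  have eq: "(\<Sum>x\<in>V-{v}. if x \<in> copy_type S u v then w x else 0) = (\<Sum>x\<in>V-{v}. if x \<in> S then w x else 0)"
    by (intro sum.cong) (auto simp: copy_type_def)
  show ?thesis
    using phi_split[OF assms, of w "copy_type S u v"] phi_split[OF assms, of w S] eq
    by (auto simp: copy_type_def)
qed

lemma weighted_one:
  assumes "finite A" "A \<noteq> {}"
  shows "weighted_pmf A (\<lambda>_. 1) = pmf_of_set A"
proof -
  have f: "(\<lambda>x. if x \<in> A then (1::real) / (\<Sum>y\<in>A. 1) else 0) = pmf (pmf_of_set A)"
    using assms by (auto simp: fun_eq_iff)
  have "pmf (embed_pmf (pmf (pmf_of_set A))) x = pmf (pmf_of_set A) x" for x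
    by (rule pmf_embed_pmf) (auto simp: pmf_nonneg nn_integral_pmf measure_pmf.emeasure_space_1)
  then show ?thesis unfolding weighted_pmf_def f by (intro pmf_eqI) auto
qed

lemma nn_pmf_of_set:
  assumes "finite A" "A \<noteq> {}" "\<And>x. x \<in> A \<Longrightarrow> 0 \<le> f x"
  shows "(\<integral>\<^sup>+x. ennreal (f x) \<partial>measure_pmf (pmf_of_set A)) = ennreal (sum f A / card A)"
proof -
  have "card A > 0" using assms by (simp add: card_gt_0_iff)
  then show ?thesis
    using assms by (simp add: nn_integral_pmf_of_set ennreal_of_nat_eq_real_of_nat divide_ennreal sum_nonneg)
qed

lemma nbr_swap:
  assumes sym: "\<forall>x y. E x y \<longrightarrow> E y x" and fin: "finite V"
  shows "(\<Sum>x\<in>V. \<Sum>y\<in>nbrs V E x. F x y) = (\<Sum>x\<in>V. \<Sum>y\<in>nbrs V E x. F y x)"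
proof -
  have "(\<Sum>x\<in>V. \<Sum>y\<in>nbrs V E x. F x y) = (\<Sum>y\<in>V. \<Sum>x\<in>{x\<in>V. E x y}. F x y)"
    unfolding nbrs_def by (rule sum.swap_restrict[OF fin fin])
  also have "\<dots> = (\<Sum>y\<in>V. \<Sum>x\<in>nbrs V E y. F x y)"
    unfolding nbrs_def using sym by (intro sum.cong) (auto intro!: arg_cong[where f="\<lambda>A. sum _ A"])
  finally show ?thesis .
qed

lemma zero_sum:
  assumes sym: "\<forall>x y. E x y \<longrightarrow> E y x" and fin: "finite V"
    and c: "\<And>x y. c x y = c y x"
  shows "(\<Sum>x\<in>V. \<Sum>y\<in>nbrs V E x. c x y * (g x - g y)) = (0::real)"
proof -
  have "(\<Sum>x\<in>V. \<Sum>y\<in>nbrs V E x. c x y * (g x - g y)) = (\<Sum>x\<in>V. \<Sum>y\<in>nbrs V E x. c y x * (g y - g x))"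
    by (rule nbr_swap[OF sym fin])
  also have "\<dots> = - (\<Sum>x\<in>V. \<Sum>y\<in>nbrs V E x. c x y * (g x - g y))"
    by (simp add: sum_negf[symmetric] c algebra_simps)
  finally show ?thesis by simp
qed


lemma nbrs_sub: "nbrs V E v \<subseteq> V" by (auto simp: nbrs_def)

lemma dB_int:
  assumes fin: "finite V" and ne: "\<forall>v\<in>V. nbrs V E v \<noteq> {}" and V: "V \<noteq> {}"
    and w: "\<And>x. x \<in> V \<Longrightarrow> 0 \<le> w x"
  shows "(\<integral>\<^sup>+T. ennreal (phi V w T) \<partial>measure_pmf (dB_step V E 1 S)) =
    ennreal ((\<Sum>v\<in>V. (\<Sum>u\<in>nbrs V E v. phi V w (copy_type S u v)) / card (nbrs V E v)) / card V)" (is "_ = ?rhs")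
proof -
  have fit: "fitness 1 S = (\<lambda>_. 1)" by (auto simp: fitness_def fun_eq_iff)
  have finN: "finite (nbrs V E v)" for v using fin by (auto simp: nbrs_def)
  have "(\<integral>\<^sup>+T. ennreal (phi V w T) \<partial>measure_pmf (dB_step V E 1 S)) =
     (\<integral>\<^sup>+v. (\<integral>\<^sup>+u. ennreal (phi V w (copy_type S u v)) \<partial>measure_pmf (pmf_of_set (nbrs V E v))) \<partial>measure_pmf (pmf_of_set V))"
    unfolding dB_step_def fit
    apply simp
    apply (intro nn_integral_cong_AE AE_pmfI)
    using fin V ne by (simp add: weighted_one finN)
  also have "\<dots> = (\<integral>\<^sup>+v. ennreal ((\<Sum>u\<in>nbrs V E v. phi V w (copy_type S u v)) / card (nbrs V E v)) \<partial>measure_pmf (pmf_of_set V))"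
    apply (intro nn_integral_cong_AE AE_pmfI)
    using fin V ne by (subst nn_pmf_of_set) (auto simp: finN phi_nonneg w)
  also have "\<dots> = ?rhs"
    using fin V by (subst nn_pmf_of_set) (auto intro!: divide_nonneg_nonneg sum_nonneg phi_nonneg w)
  finally show ?thesis .
qed

lemma Bd_int:
  assumes fin: "finite V" and ne: "\<forall>v\<in>V. nbrs V E v \<noteq> {}" and V: "V \<noteq> {}"
    and w: "\<And>x. x \<in> V \<Longrightarrow> 0 \<le> w x"
  shows "(\<integral>\<^sup>+T. ennreal (phi V w T) \<partial>measure_pmf (Bd_step V E 1 S)) =
    ennreal ((\<Sum>u\<in>V. (\<Sum>v\<in>nbrs V E u. phi V w (copy_type S u v)) / card (nbrs V E u)) / card V)" (is "_ = ?rhs")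
proof -
  have fit: "fitness 1 S = (\<lambda>_. 1)" by (auto simp: fitness_def fun_eq_iff)
  have finN: "finite (nbrs V E v)" for v using fin by (auto simp: nbrs_def)
  have "(\<integral>\<^sup>+T. ennreal (phi V w T) \<partial>measure_pmf (Bd_step V E 1 S)) =
     (\<integral>\<^sup>+u. (\<integral>\<^sup>+v. ennreal (phi V w (copy_type S u v)) \<partial>measure_pmf (pmf_of_set (nbrs V E u))) \<partial>measure_pmf (pmf_of_set V))"
    unfolding Bd_step_def fit
    using fin V by (simp add: weighted_one)
  also have "\<dots> = (\<integral>\<^sup>+u. ennreal ((\<Sum>v\<in>nbrs V E u. phi V w (copy_type S u v)) / card (nbrs V E u)) \<partial>measure_pmf (pmf_of_set V))"
    apply (intro nn_integral_cong_AE AE_pmfI)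
    using fin V ne by (subst nn_pmf_of_set) (auto simp: finN phi_nonneg w)
  also have "\<dots> = ?rhs"
    using fin V by (subst nn_pmf_of_set) (auto intro!: divide_nonneg_nonneg sum_nonneg phi_nonneg w)
  finally show ?thesis .
qed


definition ind :: "'a set \<Rightarrow> 'a \<Rightarrow> real" where "ind S x = (if x \<in> S then 1 else 0)"

lemma dB_local:
  assumes fin: "finite V" and v: "v \<in> V" and ne: "nbrs V E v \<noteq> {}"
  shows "(\<Sum>u\<in>nbrs V E v. phi V w (copy_type S u v)) / card (nbrs V E v)
     = phi V w S + (\<Sum>u\<in>nbrs V E v. (w v / card (nbrs V E v)) * (ind S u - ind S v))"
proof -
  have finN: "finite (nbrs V E v)" using fin by (auto simp: nbrs_def)
  have c: "real (card (nbrs V E v)) > 0" using finN ne by (simp add: card_gt_0_iff)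
  have "(\<Sum>u\<in>nbrs V E v. phi V w (copy_type S u v)) = (\<Sum>u\<in>nbrs V E v. phi V w S + w v * (ind S u - ind S v))"
    by (intro sum.cong) (auto simp: phi_copy[OF fin v] ind_def)
  also have "\<dots> = card (nbrs V E v) * phi V w S + w v * (\<Sum>u\<in>nbrs V E v. (ind S u - ind S v))"
    by (simp add: sum.distrib sum_distrib_left)
  finally have h: "(\<Sum>u\<in>nbrs V E v. phi V w (copy_type S u v)) = card (nbrs V E v) * phi V w S + w v * (\<Sum>u\<in>nbrs V E v. (ind S u - ind S v))" .
  have h2: "(\<Sum>u\<in>nbrs V E v. (w v / card (nbrs V E v)) * (ind S u - ind S v)) = w v * (\<Sum>u\<in>nbrs V E v. (ind S u - ind S v)) / card (nbrs V E v)"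
    by (simp add: sum_distrib_left[symmetric] sum_divide_distrib[symmetric])
  show ?thesis unfolding h h2 using c by (simp add: add_divide_distrib)
qed

lemma Bd_local:
  assumes fin: "finite V" and v: "u \<in> V" and ne: "nbrs V E u \<noteq> {}"
  shows "(\<Sum>v\<in>nbrs V E u. phi V w (copy_type S u v)) / card (nbrs V E u)
     = phi V w S + (\<Sum>v\<in>nbrs V E u. (w v / card (nbrs V E u)) * (ind S u - ind S v))"
proof -
  have finN: "finite (nbrs V E u)" using fin by (auto simp: nbrs_def)
  have c: "real (card (nbrs V E u)) > 0" using finN ne by (simp add: card_gt_0_iff)
  have "(\<Sum>v\<in>nbrs V E u. phi V w (copy_type S u v)) = (\<Sum>v\<in>nbrs V E u. phi V w S + w v * (ind S u - ind S v))"
    using nbrs_sub[of V E u] by (intro sum.cong) (auto simp: phi_copy[OF fin] ind_def)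
  also have "\<dots> = card (nbrs V E u) * phi V w S + (\<Sum>v\<in>nbrs V E u. w v * (ind S u - ind S v))"
    by (simp add: sum.distrib)
  finally have h: "(\<Sum>v\<in>nbrs V E u. phi V w (copy_type S u v)) = card (nbrs V E u) * phi V w S + (\<Sum>v\<in>nbrs V E u. w v * (ind S u - ind S v))" .
  have h2: "(\<Sum>v\<in>nbrs V E u. (w v / card (nbrs V E u)) * (ind S u - ind S v)) = (\<Sum>v\<in>nbrs V E u. w v * (ind S u - ind S v)) / card (nbrs V E u)"
    by (simp add: sum_divide_distrib)
  show ?thesis unfolding h h2 using c by (simp add: add_divide_distrib)
qed


definition deg :: "'a set \<Rightarrow> ('a \<Rightarrow> 'a \<Rightarrow> bool) \<Rightarrow> 'a \<Rightarrow> real" where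
  "deg V E v = real (card (nbrs V E v))"

lemma dB_mart:
  assumes fin: "finite V" and ne: "\<forall>v\<in>V. nbrs V E v \<noteq> {}" and V: "V \<noteq> {}"
    and sym: "\<forall>x y. E x y \<longrightarrow> E y x"
  shows "(\<integral>\<^sup>+T. ennreal (phi V (deg V E) T) \<partial>measure_pmf (dB_step V E 1 S)) = ennreal (phi V (deg V E) S)"
proof -
  have cV: "real (card V) > 0" using fin V by (simp add: card_gt_0_iff)
  have dpos: "deg V E v > 0" if "v \<in> V" for v
    using that ne fin nbrs_sub[of V E v] by (auto simp: deg_def card_gt_0_iff intro: finite_subset)
  have dposN: "real (card (nbrs V E v)) \<noteq> 0" if "v \<in> V" for v
    using dpos[OF that] by (simp add: deg_def)
  have "(\<Sum>v\<in>V. (\<Sum>u\<in>nbrs V E v. phi V (deg V E) (copy_type S u v)) / card (nbrs V E v))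
     = (\<Sum>v\<in>V. phi V (deg V E) S + (\<Sum>u\<in>nbrs V E v. 1 * (ind S u - ind S v)))"
    apply (intro sum.cong refl)
    apply (subst dB_local[OF fin]) using ne dpos by (auto simp: deg_def) (metis dposN of_nat_0)
  also have "\<dots> = card V * phi V (deg V E) S + (\<Sum>v\<in>V. \<Sum>u\<in>nbrs V E v. 1 * (ind S u - ind S v))"
    by (simp add: sum.distrib)
  also have "(\<Sum>v\<in>V. \<Sum>u\<in>nbrs V E v. 1 * (ind S u - ind S v)) = - (\<Sum>v\<in>V. \<Sum>u\<in>nbrs V E v. 1 * (ind S v - ind S u))"
    by (simp add: sum_negf[symmetric])
  also have "(\<Sum>v\<in>V. \<Sum>u\<in>nbrs V E v. 1 * (ind S v - ind S u)) = 0"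
    by (rule zero_sum[OF sym fin]) simp
  finally have eq: "(\<Sum>v\<in>V. (\<Sum>u\<in>nbrs V E v. phi V (deg V E) (copy_type S u v)) / card (nbrs V E v)) = card V * phi V (deg V E) S" by simp
  have dnn: "0 \<le> deg V E x" for x by (simp add: deg_def)
  show ?thesis
    apply (subst dB_int[OF fin ne V])
    apply (simp add: dnn)
    using eq cV by simp
qed

lemma Bd_mart:
  assumes fin: "finite V" and ne: "\<forall>v\<in>V. nbrs V E v \<noteq> {}" and V: "V \<noteq> {}"
    and sym: "\<forall>x y. E x y \<longrightarrow> E y x"
  shows "(\<integral>\<^sup>+T. ennreal (phi V (\<lambda>v. 1 / deg V E v) T) \<partial>measure_pmf (Bd_step V E 1 S))
     = ennreal (phi V (\<lambda>v. 1 / deg V E v) S)"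
proof -
  have cV: "real (card V) > 0" using fin V by (simp add: card_gt_0_iff)
  have "(\<Sum>u\<in>V. (\<Sum>v\<in>nbrs V E u. phi V (\<lambda>v. 1 / deg V E v) (copy_type S u v)) / card (nbrs V E u))
     = (\<Sum>u\<in>V. phi V (\<lambda>v. 1 / deg V E v) S + (\<Sum>v\<in>nbrs V E u. (1 / (deg V E u * deg V E v)) * (ind S u - ind S v)))"
    apply (intro sum.cong refl)
    apply (subst Bd_local[OF fin]) using ne by (auto simp: deg_def intro!: sum.cong)
  also have "\<dots> = card V * phi V (\<lambda>v. 1 / deg V E v) S + (\<Sum>u\<in>V. \<Sum>v\<in>nbrs V E u. (1 / (deg V E u * deg V E v)) * (ind S u - ind S v))"
    by (simp add: sum.distrib)
  also have "(\<Sum>u\<in>V. \<Sum>v\<in>nbrs V E u. (1 / (deg V E u * deg V E v)) * (ind S u - ind S v)) = 0"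
    by (rule zero_sum[OF sym fin]) (simp add: mult.commute)
  finally show ?thesis
    apply (subst Bd_int[OF fin ne V])
    using cV by (auto simp: deg_def)
qed

lemma mixed_mart1:
  assumes fin: "finite V" and ne: "\<forall>v\<in>V. nbrs V E v \<noteq> {}" and V: "V \<noteq> {}"
    and sym: "\<forall>x y. E x y \<longrightarrow> E y x"
  shows "(\<integral>\<^sup>+T. ennreal (phi V (deg V E) T) \<partial>measure_pmf (mixed_step 1 V E 1 S)) = ennreal (phi V (deg V E) S)"
  unfolding mixed_step_def using dB_mart[OF assms] by simp

lemma mixed_mart0:
  assumes fin: "finite V" and ne: "\<forall>v\<in>V. nbrs V E v \<noteq> {}" and V: "V \<noteq> {}"
    and sym: "\<forall>x y. E x y \<longrightarrow> E y x"
  shows "(\<integral>\<^sup>+T. ennreal (phi V (\<lambda>v. 1 / deg V E v) T) \<partial>measure_pmf (mixed_step 0 V E 1 S))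
     = ennreal (phi V (\<lambda>v. 1 / deg V E v) S)"
  unfolding mixed_step_def using Bd_mart[OF assms] by simp

lemma fp_bound:
  assumes H: "\<And>S. (\<integral>\<^sup>+T. ennreal (f T) \<partial>measure_pmf (mixed_step \<delta> V E r S)) = ennreal (f S)"
    and nn: "\<And>S. 0 \<le> f S" and pos: "f V > 0"
  shows "fp \<delta> V E r S0 \<le> f S0 / f V"
proof -
  have I: "(\<integral>\<^sup>+T. ennreal (f T) \<partial>measure_pmf (state_dist \<delta> V E r S0 n)) = ennreal (f S0)" for n
  proof (induction n)
    case 0 then show ?case by (simp add: state_dist_def nn)
  next
    case (Suc n)
    have "state_dist \<delta> V E r S0 (Suc n) = bind_pmf (state_dist \<delta> V E r S0 n) (mixed_step \<delta> V E r)"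
      by (simp add: state_dist_def)
    then show ?case using Suc by (simp add: H)
  qed
  have "pmf (state_dist \<delta> V E r S0 n) V \<le> f S0 / f V" for n
  proof -
    let ?p = "state_dist \<delta> V E r S0 n"
    have "ennreal (f V) * ennreal (pmf ?p V) = (\<integral>\<^sup>+T. ennreal (f V) * indicator {V} T \<partial>measure_pmf ?p)"
      by (simp add: emeasure_pmf_single)
    also have "\<dots> \<le> (\<integral>\<^sup>+T. ennreal (f T) \<partial>measure_pmf ?p)"
      by (intro nn_integral_mono) (auto split: split_indicator)
    finally have "ennreal (f V * pmf ?p V) \<le> ennreal (f S0)"
      using I by (simp add: ennreal_mult' nn)
    then have "f V * pmf ?p V \<le> f S0" using nn by simp
    then show ?thesis using pos by (simp add: field_simps)
  qed
  then show ?thesis unfolding fp_def by (intro cSUP_least) auto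
qed


lemma cs_ineq:
  fixes f :: "'a \<Rightarrow> real"
  assumes fin: "finite V" and pos: "\<And>x. x \<in> V \<Longrightarrow> f x > 0"
  shows "real (card V) ^ 2 \<le> (\<Sum>x\<in>V. f x) * (\<Sum>y\<in>V. 1 / f y)"
proof -
  have P: "(\<Sum>x\<in>V. f x) * (\<Sum>y\<in>V. 1 / f y) = (\<Sum>x\<in>V. \<Sum>y\<in>V. f x / f y)"
    by (simp add: sum_product)
  have Q: "(\<Sum>x\<in>V. \<Sum>y\<in>V. f x / f y) = (\<Sum>x\<in>V. \<Sum>y\<in>V. f y / f x)"
    by (rule sum.swap)
  have two: "2 \<le> f x / f y + f y / f x" if "x \<in> V" "y \<in> V" for x y
  proof -
    have a: "f x > 0" "f y > 0" using pos that by auto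
    have "0 \<le> (f x - f y)^2" by simp
    then have "2 * (f x * f y) \<le> f x * f x + f y * f y" by (simp add: power2_eq_square algebra_simps)
    then show ?thesis using a by (simp add: field_simps)
  qed
  have "2 * real (card V) ^ 2 = (\<Sum>x\<in>V. \<Sum>y\<in>V. (2::real))"
    by (simp add: power2_eq_square)
  also have "\<dots> \<le> (\<Sum>x\<in>V. \<Sum>y\<in>V. f x / f y + f y / f x)"
    using two by (intro sum_mono) auto
  also have "\<dots> = 2 * ((\<Sum>x\<in>V. f x) * (\<Sum>y\<in>V. 1 / f y))"
    unfolding P by (simp add: sum.distrib Q[symmetric])
  finally show ?thesis by simp
qed

lemma phi_single: "finite V \<Longrightarrow> u \<in> V \<Longrightarrow> phi V w {u} = w u"
  unfolding phi_def by (simp add: sum.delta')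

lemma phi_all: "phi V w V = sum w V"
  unfolding phi_def by simp

lemma fp_le1: "fp \<delta> V E r S0 \<le> 1"
  unfolding fp_def by (intro cSUP_least) (auto simp: pmf_le_1)

theorem mainTheorem8:
  fixes V :: "'a set" and E :: "'a \<Rightarrow> 'a \<Rightarrow> bool" and u :: 'a
  assumes "connected_graph V E" and "u \<in> V"
  shows "min (fp 1 V E 1 {u}) (fp 0 V E 1 {u}) \<le> 1 / real (card V)"
proof -
  have fin: "finite V" and V: "V \<noteq> {}" and inV: "\<forall>x y. E x y \<longrightarrow> x \<in> V \<and> y \<in> V"
    and sym: "\<forall>x y. E x y \<longrightarrow> E y x" and conn: "\<forall>x\<in>V. \<forall>y\<in>V. E\<^sup>*\<^sup>* x y"
    using assms(1) unfolding connected_graph_def by auto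
  show ?thesis
  proof (cases "card V = 1")
    case True
    then show ?thesis using fp_le1[of 1 V E 1 "{u}"] by simp
  next
    case False
    then have c2: "card V \<ge> 2" using fin V by (metis One_nat_def Suc_1 card_0_eq less_2_cases not_less)
    have ne: "\<forall>v\<in>V. nbrs V E v \<noteq> {}"
    proof
      fix v assume v: "v \<in> V"
      obtain w where w: "w \<in> V" "w \<noteq> v"
      proof -
        have "\<not> V \<subseteq> {v}" using c2 fin
          by (metis card.empty card_mono finite.emptyI finite_insert card_insert_disjoint
              empty_iff not_less_eq_eq numeral_2_eq_2 le_zero_eq zero_neq_numeral insert_absorb2 card_1_singleton_iff subset_singletonD)
        then show ?thesis using that by auto
      qed
      have "E\<^sup>*\<^sup>* v w" using conn v w by auto
      then show "nbrs V E v \<noteq> {}"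
      proof (cases rule: converse_rtranclpE)
        case base then show ?thesis using w by simp
      next
        case (step y) then show ?thesis using inV by (auto simp: nbrs_def)
      qed
    qed
    define d where "d = deg V E"
    have dpos: "d v > 0" if "v \<in> V" for v
      using that ne fin nbrs_sub[of V E v] by (auto simp: d_def deg_def card_gt_0_iff intro: finite_subset)
    define D where "D = (\<Sum>x\<in>V. d x)"
    define H where "H = (\<Sum>x\<in>V. 1 / d x)"
    have Dpos: "D > 0" unfolding D_def using dpos fin V by (intro sum_pos) auto
    have Hpos: "H > 0" unfolding H_def using dpos fin V by (intro sum_pos) auto
    have a: "fp 1 V E 1 {u} \<le> d u / D"
    proof -
      have "fp 1 V E 1 {u} \<le> phi V d {u} / phi V d V"
        apply (rule fp_bound)
        using mixed_mart1[OF fin ne V sym] apply (simp add: d_def)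
        using dpos apply (intro phi_nonneg) apply force
        using Dpos by (simp add: phi_all D_def)
      then show ?thesis using phi_single[OF fin assms(2)] by (simp add: phi_all D_def)
    qed
    have b: "fp 0 V E 1 {u} \<le> (1 / d u) / H"
    proof -
      have "fp 0 V E 1 {u} \<le> phi V (\<lambda>v. 1 / d v) {u} / phi V (\<lambda>v. 1 / d v) V"
        apply (rule fp_bound)
        using mixed_mart0[OF fin ne V sym] apply (simp add: d_def)
        using dpos apply (intro phi_nonneg) apply force
        using Hpos by (simp add: phi_all H_def)
      then show ?thesis using phi_single[OF fin assms(2)] by (simp add: phi_all H_def)
    qed
    have cs: "real (card V) ^ 2 \<le> D * H"
      unfolding D_def H_def by (rule cs_ineq[OF fin dpos])
    have du: "d u > 0" using dpos assms(2) by auto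
    have N: "real (card V) > 0" using c2 by simp
    show ?thesis
    proof (cases "d u / D \<le> 1 / real (card V)")
      case True then show ?thesis using a by linarith
    next
      case False
      then have "D < d u * real (card V)" using Dpos N by (simp add: field_simps)
      then have "D * H < d u * real (card V) * H" using Hpos by simp
      then have "real (card V) ^ 2 < d u * real (card V) * H" using cs by linarith
      then have "real (card V) < d u * H" using N by (simp add: power2_eq_square)
      then have "(1 / d u) / H < 1 / real (card V)" using du Hpos N by (simp add: field_simps)
      then show ?thesis using b by linarith
    qed
  qed
qed

end
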